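(* Consider the setting and the algorithm described in the context, run with $\varrho\in(0,1)$. For each $k\in\mathbb{N}$, $\|y^k-\bar x^k\|\le a_2^{-1}\eta(1+\|G_k\|)[r(x^k)]^{1+\tau-\varrho}$, where $\bar x^k$ is the unique minimizer of $\Theta_k$.
   Context: Let $A\in\mathbb{R}^{m\times n}$, $b\in\mathbb{R}^m$, and let $\psi:\mathbb{R}^m\to(-\infty,\infty]$ and $g:\mathbb{R}^n\to(-\infty,\infty]$ be proper lower semicontinuous functions. Set $f(x):=\psi(Ax-b)$ and $F:=f+g$. Assume: (i) there is an open set $\mathcal{O}\supseteq\mathrm{dom}\,g$ such that $\psi$ is twice continuously differentiable on $A(\mathcal{O})-b$; (ii) $g$ is convex and continuous relative to $\mathrm{dom}\,g$; (iii) $\inf F>-\infty$ and $F$ is level bounded. Let $\mathcal{P}g(x):=\arg\min_z\{\frac12\|z-x\|^2+g(z)\}$, $R(x):=x-\mathcal{P}g(x-\nabla f(x))$, $r(x):=\|R(x)\|$. Write $[a]_+=\max(0,a)$, $\lambda_{\min}$ for the smallest eigenvalue, $\|G\|$ for the spectral norm. Algorithm: parameters $a_1\ge1$, $a_2>0$, $\varrho\in[0,1)$, $\tau\ge\varrho$, $\eta,\beta,\sigma\in(0,1)$, $x^0\in\mathrm{dom}\,g$. At iteration $k$: $\mu_k:=a_2[r(x^k)]^{\varrho}$, $G_k:=\nabla^2 f(x^k)+a_1[-\lambda_{\min}(\nabla^2\psi(Ax^k-b))]_+A^\top A+\mu_kI$, $\Theta_k(x):=f(x^k)+\langle\nabla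 f(x^k),x-x^k\rangle+\frac12(x-x^k)^\top G_k(x-x^k)+g(x)$, $r_k(y):=\|y-\mathcal{P}g(y-\nabla f(x^k)-G_k(y-x^k))\|$. Choose $y^k\in\mathrm{dom}\,g$ with $\Theta_k(y^k)\le\Theta_k(x^k)$ and, if $\varrho\in(0,1)$, $r_k(y^k)\le\eta\min\{r(x^k),[r(x^k)]^{1+\tau}\}$; if $\varrho=0$, $\mathrm{dist}(0,\partial\Theta_k(y^k))\le\eta\, r(x^k)$. Set $d^k:=y^k-x^k$; let $m_k$ be the smallest nonnegative integer $m$ with $F(x^k)-F(x^k+\beta^md^k)\ge\sigma\beta^m\mu_k\|d^k\|^2$, $\alpha_k:=\beta^{m_k}$, and $x^{k+1}:=y^k$ if $F(y^k)<F(x^k+\alpha_kd^k)$, otherwise $x^{k+1}:=x^k+\alpha_kd^k$. The method stops when $x^k$ is stationary or $d^k=0$; the "generated sequence" refers to the infinite sequence produced when this does not occur (so $r(x^k)>0$ and $G_k$ is positive definite for all $k$). *)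

theory Defs
  imports "HOL-Analysis.Analysis"
begin

definition lsc :: "('a::metric_space \<Rightarrow> ereal) \<Rightarrow> bool" where
  "lsc h \<longleftrightarrow> (\<forall>x X. X \<longlonglongrightarrow> x \<longrightarrow> h x \<le> liminf (\<lambda>k. h (X k)))"

definition proper :: "('a \<Rightarrow> ereal) \<Rightarrow> bool" where
  "proper h \<longleftrightarrow> (\<forall>x. h x \<noteq> -\<infinity>) \<and> (\<exists>x. h x \<noteq> \<infinity>)"

definition edom :: "('a \<Rightarrow> ereal) \<Rightarrow> 'a set" where
  "edom h = {x. h x < \<infinity>}"

definition grad :: "(real^'n \<Rightarrow> real) \<Rightarrow> real^'n \<Rightarrow> real^'n" where
  "grad h x = (\<chi> i. frechet_derivative h (at x) (axis i 1))"

definition hess :: "(real^'n \<Rightarrow> real) \<Rightarrow> real^'n \<Rightarrow> real^'n^'n" where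
  "hess h x = (\<chi> i j. frechet_derivative (\<lambda>y. grad h y $ i) (at x) (axis j 1))"

definition C2_on :: "(real^'n) set \<Rightarrow> (real^'n \<Rightarrow> real) \<Rightarrow> bool" where
  "C2_on V h \<longleftrightarrow> (\<forall>u\<in>V. h differentiable (at u)) \<and>
     (\<forall>u\<in>V. \<forall>i. (\<lambda>y. grad h y $ i) differentiable (at u)) \<and>
     continuous_on V (hess h)"

definition lambda_min :: "real^'n^'n \<Rightarrow> real" where
  "lambda_min M = Min {l. \<exists>v. v \<noteq> 0 \<and> M *v v = l *\<^sub>R v}"

definition spec_norm :: "real^'n^'m \<Rightarrow> real" where
  "spec_norm M = onorm (\<lambda>v. M *v v)"

text \<open>Proximal mapping of g (the unique minimiser, g proper lsc convex).\<close>
definition prox :: "(real^'n \<Rightarrow> ereal) \<Rightarrow> real^'n \<Rightarrow> real^'n" where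
  "prox g x = (THE z. \<forall>w. ereal (1/2 * (norm (z - x))\<^sup>2) + g z \<le> ereal (1/2 * (norm (w - x))\<^sup>2) + g w)"

text \<open>f(x) = psi(Ax - b); real version used for derivatives (psi is finite near dom g).\<close>
definition fobj :: "real^'n^'m \<Rightarrow> real^'m \<Rightarrow> (real^'m \<Rightarrow> ereal) \<Rightarrow> real^'n \<Rightarrow> ereal" where
  "fobj A b psi x = psi (A *v x - b)"

definition freal :: "real^'n^'m \<Rightarrow> real^'m \<Rightarrow> (real^'m \<Rightarrow> ereal) \<Rightarrow> real^'n \<Rightarrow> real" where
  "freal A b psi x = real_of_ereal (psi (A *v x - b))"

definition Fobj :: "real^'n^'m \<Rightarrow> real^'m \<Rightarrow> (real^'m \<Rightarrow> ereal) \<Rightarrow> (real^'n \<Rightarrow> ereal) \<Rightarrow> real^'n \<Rightarrow> ereal" where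
  "Fobj A b psi g x = fobj A b psi x + g x"

definition resid :: "real^'n^'m \<Rightarrow> real^'m \<Rightarrow> (real^'m \<Rightarrow> ereal) \<Rightarrow> (real^'n \<Rightarrow> ereal) \<Rightarrow> real^'n \<Rightarrow> real" where
  "resid A b psi g x = norm (x - prox g (x - grad (freal A b psi) x))"

definition mu :: "real^'n^'m \<Rightarrow> real^'m \<Rightarrow> (real^'m \<Rightarrow> ereal) \<Rightarrow> (real^'n \<Rightarrow> ereal) \<Rightarrow> real \<Rightarrow> real \<Rightarrow> real^'n \<Rightarrow> real" where
  "mu A b psi g a2 \<rho> xk = a2 * (resid A b psi g xk) powr \<rho>"

definition Gmat :: "real^'n^'m \<Rightarrow> real^'m \<Rightarrow> (real^'m \<Rightarrow> ereal) \<Rightarrow> (real^'n \<Rightarrow> ereal) \<Rightarrow> real \<Rightarrow> real \<Rightarrow> real \<Rightarrow> real^'n \<Rightarrow> real^'n^'n" where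
  "Gmat A b psi g a1 a2 \<rho> xk =
     hess (freal A b psi) xk
     + (a1 * max 0 (- lambda_min (hess (\<lambda>u. real_of_ereal (psi u)) (A *v xk - b)))) *\<^sub>R (transpose A ** A)
     + mu A b psi g a2 \<rho> xk *\<^sub>R mat 1"

definition Theta :: "real^'n^'m \<Rightarrow> real^'m \<Rightarrow> (real^'m \<Rightarrow> ereal) \<Rightarrow> (real^'n \<Rightarrow> ereal) \<Rightarrow> real \<Rightarrow> real \<Rightarrow> real \<Rightarrow> real^'n \<Rightarrow> real^'n \<Rightarrow> ereal" where
  "Theta A b psi g a1 a2 \<rho> xk x =
     ereal (freal A b psi xk + grad (freal A b psi) xk \<bullet> (x - xk)
            + 1/2 * ((x - xk) \<bullet> (Gmat A b psi g a1 a2 \<rho> xk *v (x - xk)))) + g x"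

definition rk :: "real^'n^'m \<Rightarrow> real^'m \<Rightarrow> (real^'m \<Rightarrow> ereal) \<Rightarrow> (real^'n \<Rightarrow> ereal) \<Rightarrow> real \<Rightarrow> real \<Rightarrow> real \<Rightarrow> real^'n \<Rightarrow> real^'n \<Rightarrow> real" where
  "rk A b psi g a1 a2 \<rho> xk y =
     norm (y - prox g (y - grad (freal A b psi) xk - Gmat A b psi g a1 a2 \<rho> xk *v (y - xk)))"

definition generated_seq ::
  "real^'n^'m \<Rightarrow> real^'m \<Rightarrow> (real^'m \<Rightarrow> ereal) \<Rightarrow> (real^'n \<Rightarrow> ereal) \<Rightarrow>
   real \<Rightarrow> real \<Rightarrow> real \<Rightarrow> real \<Rightarrow> real \<Rightarrow> real \<Rightarrow> real \<Rightarrow>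
   (nat \<Rightarrow> real^'n) \<Rightarrow> (nat \<Rightarrow> real^'n) \<Rightarrow> bool" where
  "generated_seq A b psi g a1 a2 \<rho> \<tau> \<eta> \<beta> \<sigma> x y \<longleftrightarrow>
     x 0 \<in> edom g \<and>
     (\<forall>k. resid A b psi g (x k) > 0 \<and> y k \<noteq> x k) \<and>
     (\<forall>k. y k \<in> edom g
        \<and> Theta A b psi g a1 a2 \<rho> (x k) (y k) \<le> Theta A b psi g a1 a2 \<rho> (x k) (x k)
        \<and> rk A b psi g a1 a2 \<rho> (x k) (y k)
            \<le> \<eta> * min (resid A b psi g (x k)) ((resid A b psi g (x k)) powr (1 + \<tau>))) \<and>
     (\<forall>k. let d = y k - x k;
             m = (LEAST m::nat. Fobj A b psi g (x k + (\<beta> ^ m) *\<^sub>R d)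
                     + ereal (\<sigma> * \<beta> ^ m * mu A b psi g a2 \<rho> (x k) * (norm d)\<^sup>2)
                   \<le> Fobj A b psi g (x k));
             \<alpha> = \<beta> ^ m
         in x (Suc k) = (if Fobj A b psi g (y k) < Fobj A b psi g (x k + \<alpha> *\<^sub>R d)
                         then y k else x k + \<alpha> *\<^sub>R d))"

end

theory Submission
  imports Defs
begin



lemma sym_inner:
  fixes M :: "real^'n^'n"
  assumes "Finite_Cartesian_Product.transpose M = M"
  shows "x \<bullet> (M *v y) = (M *v x) \<bullet> y"
proof -
  have "x \<bullet> (M *v y) = (x v* M) \<bullet> y" by (simp add: dot_lmul_matrix)
  also have "x v* M = x v* Finite_Cartesian_Product.transpose M" using assms by simp
  also have "\<dots> = M *v x" by (simp add: vector_transpose_matrix)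
  finally show ?thesis .
qed

lemma transpose_add_mat:
  fixes X Y :: "real^'n^'m"
  shows "Finite_Cartesian_Product.transpose (X + Y) = Finite_Cartesian_Product.transpose X + Finite_Cartesian_Product.transpose Y"
  by (simp add: vec_eq_iff transpose_def)

lemma small_pos_contra:
  fixes c K :: real
  assumes "\<And>t. 0 < t \<Longrightarrow> t \<le> 1 \<Longrightarrow> c \<le> t * K"
  shows "c \<le> 0"
proof (rule ccontr)
  assume "\<not> c \<le> 0"
  hence c: "c > 0" by simp
  define t where "t = min 1 (c / (2 * (\<bar>K\<bar> + 1)))"
  have t0: "0 < t" "t \<le> 1" using c by (auto simp: t_def)
  have "t * K \<le> t * (\<bar>K\<bar> + 1)" using t0 by (intro mult_left_mono) auto
  also have "\<dots> \<le> c / (2 * (\<bar>K\<bar> + 1)) * (\<bar>K\<bar> + 1)"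
    by (intro mult_right_mono) (auto simp: t_def)
  also have "\<dots> = c / 2" by (simp add: field_simps)
  finally show False using assms[OF t0] c by linarith
qed

lemma rayleigh_min:
  fixes H :: "real^'m^'m"
  assumes symH: "Finite_Cartesian_Product.transpose H = H"
  shows "lambda_min H * (norm v)\<^sup>2 \<le> v \<bullet> (H *v v)"
proof -
  define S :: "(real^'m) set" where "S = sphere 0 1"
  have cS: "compact S" by (simp add: S_def)
  have nS: "S \<noteq> {}" unfolding S_def
    by (metis norm_axis_1 mem_sphere_0 empty_iff)
  have contQ: "continuous_on S (\<lambda>v. v \<bullet> (H *v v))"
    by (intro continuous_intros matrix_vector_mult_linear_continuous_on)
  obtain v0 where v0S: "v0 \<in> S" and v0min: "\<And>y. y \<in> S \<Longrightarrow> v0 \<bullet> (H *v v0) \<le> y \<bullet> (H *v y)"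
    using continuous_attains_inf[OF cS nS contQ] by blast
  define l0 where "l0 = v0 \<bullet> (H *v v0)"
  have nv0: "norm v0 = 1" using v0S by (simp add: S_def)
  have quad: "l0 * (norm v)\<^sup>2 \<le> v \<bullet> (H *v v)" for v
  proof (cases "v = 0")
    case True then show ?thesis by simp
  next
    case False
    define u where "u = (1 / norm v) *\<^sub>R v"
    have "u \<in> S" using False by (simp add: S_def u_def)
    hence "l0 \<le> u \<bullet> (H *v u)" using v0min l0_def by simp
    also have "u \<bullet> (H *v u) = (1 / norm v)\<^sup>2 * (v \<bullet> (H *v v))"
      by (simp add: u_def matrix_vector_mult_scaleR power2_eq_square algebra_simps)
    finally have "l0 \<le> (1 / norm v)\<^sup>2 * (v \<bullet> (H *v v))" .
    hence "l0 * (norm v)\<^sup>2 \<le> (1 / norm v)\<^sup>2 * (v \<bullet> (H *v v)) * (norm v)\<^sup>2"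
      by (simp add: mult_right_mono)
    also have "\<dots> = v \<bullet> (H *v v)" using False by (simp add: field_simps)
    finally show ?thesis .
  qed
  define w where "w = H *v v0 - l0 *\<^sub>R v0"
  define K where "K = w \<bullet> (H *v w) - l0 * (norm w)\<^sup>2"
  have expand: "(v0 + t *\<^sub>R w) \<bullet> (H *v (v0 + t *\<^sub>R w)) - l0 * (norm (v0 + t *\<^sub>R w))\<^sup>2
        = 2 * t * (norm w)\<^sup>2 + t\<^sup>2 * K" for t
  proof -
    have s: "v0 \<bullet> (H *v w) = (H *v v0) \<bullet> w" by (rule sym_inner[OF symH])
    have "(v0 + t *\<^sub>R w) \<bullet> (H *v (v0 + t *\<^sub>R w)) =
          v0 \<bullet> (H *v v0) + t * (v0 \<bullet> (H *v w)) + t * (w \<bullet> (H *v v0)) + t\<^sup>2 * (w \<bullet> (H *v w))"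
      by (simp add: matrix_vector_right_distrib matrix_vector_mult_scaleR inner_add_left inner_add_right power2_eq_square algebra_simps)
    moreover have "(norm (v0 + t *\<^sub>R w))\<^sup>2 = 1 + 2 * t * (v0 \<bullet> w) + t\<^sup>2 * (norm w)\<^sup>2"
    proof -
      have "v0 \<bullet> v0 = 1" using nv0 by (simp add: norm_eq_1)
      thus ?thesis unfolding power2_norm_eq_inner
        by (simp add: inner_add_left inner_add_right power2_eq_square algebra_simps inner_commute)
    qed
    moreover have nw: "w \<bullet> (H *v v0) = (norm w)\<^sup>2 + l0 * (v0 \<bullet> w)"
      by (simp add: w_def power2_norm_eq_inner inner_diff_left inner_diff_right algebra_simps inner_commute)
    moreover have "v0 \<bullet> (H *v w) = w \<bullet> (H *v v0)" using s by (simp add: inner_commute)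
    ultimately show ?thesis 
      by (simp add: K_def l0_def[symmetric] algebra_simps power2_eq_square)
  qed
  have w0: "w = 0"
  proof (rule ccontr)
    assume "w \<noteq> 0"
    hence wp: "(norm w)\<^sup>2 > 0" by simp
    have "2 * (norm w)\<^sup>2 \<le> t * K" if "0 < t" "t \<le> 1" for t
    proof -
      have "0 \<le> 2 * (-t) * (norm w)\<^sup>2 + (-t)\<^sup>2 * K"
        using quad[of "v0 + (-t) *\<^sub>R w"] expand[of "-t"] by simp
      hence "t * (2 * (norm w)\<^sup>2) \<le> t * (t * K)"
        by (simp add: power2_eq_square algebra_simps)
      thus ?thesis using that by simp
    qed
    from small_pos_contra[OF this] wp show False by simp
  qed
  hence eig: "H *v v0 = l0 *\<^sub>R v0" by (simp add: w_def)
  define E where "E = {l. \<exists>v. v \<noteq> 0 \<and> H *v v = l *\<^sub>R v}"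
  have l0E: "l0 \<in> E" unfolding E_def using eig nv0 by (intro CollectI exI[of _ v0]) auto
  define ev where "ev l = (SOME v. v \<noteq> 0 \<and> H *v v = l *\<^sub>R v)" for l
  have ev: "ev l \<noteq> 0 \<and> H *v ev l = l *\<^sub>R ev l" if "l \<in> E" for l
    using that unfolding E_def ev_def by (metis (mono_tags, lifting) mem_Collect_eq someI_ex)
  have inj: "inj_on ev E"
  proof (rule inj_onI)
    fix l l' assume "l \<in> E" "l' \<in> E" "ev l = ev l'"
    hence "l *\<^sub>R ev l = l' *\<^sub>R ev l" "ev l \<noteq> 0" using ev by metis+
    thus "l = l'" by (metis scaleR_cancel_right)
  qed
  have orth: "pairwise orthogonal (ev ` E)"
  proof (auto simp: pairwise_def)
    fix l l' assume lE: "l \<in> E" "l' \<in> E" and ne: "ev l \<noteq> ev l'"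
    hence "l \<noteq> l'" by auto
    have "l * (ev l \<bullet> ev l') = (H *v ev l) \<bullet> ev l'" using ev[OF lE(1)] by simp
    also have "\<dots> = ev l \<bullet> (H *v ev l')" using sym_inner[OF symH] by simp
    also have "\<dots> = l' * (ev l \<bullet> ev l')" using ev[OF lE(2)] by simp
    finally show "orthogonal (ev l) (ev l')" using \<open>l \<noteq> l'\<close> by (simp add: orthogonal_def)
  qed
  have "0 \<notin> ev ` E" using ev by auto
  hence "finite (ev ` E)" using independent_bound pairwise_orthogonal_independent[OF orth] by blast
  hence finE: "finite E" using inj finite_imageD by blast
  have "lambda_min H \<le> l0" unfolding lambda_min_def E_def[symmetric] using finE l0E by simp
  hence "lambda_min H * (norm v)\<^sup>2 \<le> l0 * (norm v)\<^sup>2" by (simp add: mult_right_mono)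
  thus ?thesis using quad[of v] by linarith
qed


definition goodg :: "(real^'n \<Rightarrow> ereal) \<Rightarrow> bool" where
  "goodg g \<longleftrightarrow> proper g \<and> lsc g \<and> convex (edom g) \<and> convex_on (edom g) (\<lambda>x. real_of_ereal (g x))
     \<and> continuous_on (edom g) (\<lambda>x. real_of_ereal (g x))"

lemma gfin:
  assumes "goodg g" "x \<in> edom g"
  shows "g x = ereal (real_of_ereal (g x))"
proof -
  have "g x \<noteq> -\<infinity>" "g x < \<infinity>" using assms unfolding goodg_def proper_def edom_def by auto
  thus ?thesis by (cases "g x") auto
qed

lemma notdom: "x \<notin> edom g \<Longrightarrow> g x = \<infinity>"
  unfolding edom_def by (simp add: top.not_eq_extremum)

lemma dom_ne: "goodg g \<Longrightarrow> \<exists>x. x \<in> edom g"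
  unfolding goodg_def proper_def edom_def by (auto simp: less_top)

lemma lsc_bdd_below:
  fixes g :: "real^'n \<Rightarrow> ereal"
  assumes gg: "goodg g" and K: "compact K"
  shows "\<exists>m. \<forall>z\<in>K. ereal m \<le> g z"
proof (rule ccontr)
  assume "\<not> ?thesis"
  hence "\<forall>n::nat. \<exists>z\<in>K. g z < ereal (- real n)" by (meson not_le)
  then obtain Z where Z: "\<And>n. Z n \<in> K" "\<And>n. g (Z n) < ereal (- real n)" by metis
  obtain l \<sigma> where l: "l \<in> K" "strict_mono \<sigma>" "(Z \<circ> \<sigma>) \<longlonglongrightarrow> l"
    using K Z(1) unfolding compact_def by metis
  have lscg: "lsc g" using gg by (simp add: goodg_def)
  have le: "g l \<le> liminf (\<lambda>k. g ((Z \<circ> \<sigma>) k))" using lscg l(3) unfolding lsc_def by blast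
  have bnd: "g l \<le> ereal (- real N)" for N :: nat
  proof -
    have "\<forall>\<^sub>F k in sequentially. g ((Z \<circ> \<sigma>) k) \<le> ereal (- real N)"
    proof (rule eventually_sequentiallyI[of N])
      fix k assume "N \<le> k"
      hence "N \<le> \<sigma> k" using seq_suble[OF l(2), of k] by linarith
      hence "ereal (- real (\<sigma> k)) \<le> ereal (- real N)" by simp
      moreover have "g (Z (\<sigma> k)) \<le> ereal (- real (\<sigma> k))" using Z(2)[of "\<sigma> k"] by (rule less_imp_le)
      ultimately show "g ((Z \<circ> \<sigma>) k) \<le> ereal (- real N)" unfolding comp_apply by (rule order_trans[rotated])
    qed
    hence "liminf (\<lambda>k. g ((Z \<circ> \<sigma>) k)) \<le> liminf (\<lambda>k. ereal (- real N))" by (rule Liminf_mono)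
    also have "\<dots> = ereal (- real N)" by (simp add: Liminf_const)
    finally show ?thesis using le by simp
  qed
  have "g l \<noteq> -\<infinity>" using gg by (simp add: goodg_def proper_def)
  thus False
  proof (cases "g l")
    case (real c)
    obtain N :: nat where "- c < real N" using reals_Archimedean2 by blast
    thus False using bnd[of N] real by simp
  qed (use bnd[of 0] in auto)
qed

lemma lin_lower:
  fixes g :: "real^'n \<Rightarrow> ereal"
  assumes gg: "goodg g" and x0: "x0 \<in> edom g"
  shows "\<exists>C\<ge>0. \<forall>x\<in>edom g. - C * (1 + norm (x - x0)) \<le> real_of_ereal (g x)"
proof -
  obtain m where m: "\<And>z. z \<in> cball x0 1 \<Longrightarrow> ereal m \<le> g z"
    using lsc_bdd_below[OF gg compact_cball] by blast
  have cv: "convex (edom g)" and cvo: "convex_on (edom g) (\<lambda>x. real_of_ereal (g x))"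
    using gg by (auto simp: goodg_def)
  define g0 where "g0 = real_of_ereal (g x0)"
  define C where "C = \<bar>m\<bar> + \<bar>g0\<bar>"
  have mb: "m \<le> real_of_ereal (g z)" if "z \<in> cball x0 1" "z \<in> edom g" for z
    using m[OF that(1)] by (subst (asm) gfin[OF gg that(2)]) simp
  have "- C * (1 + norm (x - x0)) \<le> real_of_ereal (g x)" if x: "x \<in> edom g" for x
  proof (cases "norm (x - x0) \<le> 1")
    case True
    hence "x \<in> cball x0 1" by (simp add: dist_norm norm_minus_commute)
    hence "m \<le> real_of_ereal (g x)" using mb x by blast
    moreover have "(- C) * (1 + norm (x - x0)) \<le> (- C) * 1" by (rule mult_left_mono_neg) (auto simp: C_def)
    moreover have "- C \<le> m" unfolding C_def using abs_ge_minus_self[of m] abs_ge_zero[of g0] by linarith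
    ultimately show ?thesis by linarith
  next
    case False
    define t where "t = norm (x - x0)"
    have t1: "t > 1" using False by (simp add: t_def)
    define z where "z = (1 - 1/t) *\<^sub>R x0 + (1/t) *\<^sub>R x"
    have zdom: "z \<in> edom g" unfolding z_def using t1 by (intro convexD[OF cv x0 x]) auto
    have "z - x0 = (1/t) *\<^sub>R (x - x0)" by (simp add: z_def algebra_simps)
    hence "norm (z - x0) = 1" using t1 by (auto simp: t_def)
    hence "z \<in> cball x0 1" by (simp add: dist_norm norm_minus_commute)
    hence mz: "m \<le> real_of_ereal (g z)" using mb zdom by blast
    have "real_of_ereal (g z) \<le> (1 - 1/t) * g0 + (1/t) * real_of_ereal (g x)"
      unfolding z_def g0_def by (rule convex_onD[OF cvo]) (use t1 x0 x in auto)
    hence "t * m \<le> t * ((1 - 1/t) * g0 + (1/t) * real_of_ereal (g x))"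
      using mz t1 by (intro mult_left_mono) auto
    moreover have "t * ((1 - 1/t) * g0 + (1/t) * real_of_ereal (g x)) = (t - 1) * g0 + real_of_ereal (g x)"
      using t1 by (simp add: field_simps)
    ultimately have A: "t * m \<le> (t - 1) * g0 + real_of_ereal (g x)" by simp
    have "t * (- \<bar>m\<bar>) \<le> t * m" using t1 by (intro mult_left_mono) auto
    hence B: "- (t * \<bar>m\<bar>) \<le> t * m" by simp
    have "(t - 1) * g0 \<le> (t - 1) * \<bar>g0\<bar>" using t1 by (intro mult_left_mono) auto
    hence B2: "(t - 1) * g0 \<le> t * \<bar>g0\<bar>" by (simp add: algebra_simps)
    have "- C * (1 + t) \<le> - (t * \<bar>m\<bar>) - t * \<bar>g0\<bar>" using t1 unfolding C_def
      by (simp add: algebra_simps)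
    thus ?thesis using A B B2 unfolding t_def by linarith
  qed
  thus ?thesis using C_def by (intro exI[of _ C]) auto
qed


lemma q_cont:
  fixes G :: "real^'n^'n"
  assumes qdef: "\<And>x. q x = k0 + a \<bullet> (x - c) + 1/2 * ((x - c) \<bullet> (G *v (x - c)))"
  shows "continuous_on S q"
proof -
  have e: "q = (\<lambda>x. k0 + a \<bullet> (x - c) + 1/2 * ((x - c) \<bullet> (G *v (x - c))))" by (rule ext) (simp add: qdef)
  have "continuous_on S (\<lambda>x. G *v (x - c))"
    by (rule bounded_linear.continuous_on[OF matrix_vector_mul_bounded_linear]) (intro continuous_intros)
  thus ?thesis unfolding e by (intro continuous_intros)
qed

lemma q_lower:
  fixes G :: "real^'n^'n"
  assumes qdef: "\<And>x. q x = k0 + a \<bullet> (x - c) + 1/2 * ((x - c) \<bullet> (G *v (x - c)))"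
    and coerc: "\<And>d. \<mu> * (norm d)\<^sup>2 \<le> d \<bullet> (G *v d)"
  shows "k0 - norm a * norm (x - c) + \<mu> / 2 * (norm (x - c))\<^sup>2 \<le> q x"
proof -
  have "\<bar>a \<bullet> (x - c)\<bar> \<le> norm a * norm (x - c)" by (rule Cauchy_Schwarz_ineq2)
  moreover have "\<mu> * (norm (x - c))\<^sup>2 \<le> (x - c) \<bullet> (G *v (x - c))" by (rule coerc)
  ultimately show ?thesis unfolding qdef by linarith
qed

lemma exist_min:
  fixes g :: "real^'n \<Rightarrow> ereal" and G :: "real^'n^'n"
  assumes gg: "goodg g" and \<mu>: "\<mu> > 0"
    and coerc: "\<And>d. \<mu> * (norm d)\<^sup>2 \<le> d \<bullet> (G *v d)"
    and qdef: "\<And>x. q x = k0 + a \<bullet> (x - c) + 1/2 * ((x - c) \<bullet> (G *v (x - c)))"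
  shows "\<exists>xb. \<forall>z. ereal (q xb) + g xb \<le> ereal (q z) + g z"
proof -
  obtain x0 where x0: "x0 \<in> edom g" using dom_ne[OF gg] by blast
  obtain C where C: "C \<ge> 0" "\<And>x. x \<in> edom g \<Longrightarrow> - C * (1 + norm (x - x0)) \<le> real_of_ereal (g x)"
    using lin_lower[OF gg x0] by blast
  define \<phi> where "\<phi> x = q x + real_of_ereal (g x)" for x
  define \<phi>0 where "\<phi>0 = \<phi> x0"
  define K where "K = {x \<in> edom g. \<phi> x \<le> \<phi>0}"
  have x0K: "x0 \<in> K" using x0 by (simp add: K_def \<phi>0_def)
  define B where "B = \<phi>0 - k0 + C * (1 + norm (c - x0))"
  define P where "P = norm a + C + \<bar>B\<bar>"
  define R where "R = max 1 (2 * P / \<mu>)"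
  have Ksub: "K \<subseteq> cball c R"
  proof
    fix x assume xK: "x \<in> K"
    define t where "t = norm (x - c)"
    have t0: "t \<ge> 0" by (simp add: t_def)
    have ql: "k0 - norm a * t + \<mu> / 2 * t\<^sup>2 \<le> q x" using q_lower[OF qdef coerc] by (simp add: t_def)
    have "norm (x - x0) \<le> t + norm (c - x0)"
      using norm_triangle_ineq[of "x - c" "c - x0"] by (simp add: t_def)
    hence "C * (1 + norm (x - x0)) \<le> C * (1 + t + norm (c - x0))" using C(1) by (intro mult_left_mono) auto
    moreover have "- C * (1 + norm (x - x0)) \<le> real_of_ereal (g x)" using C(2) xK by (simp add: K_def)
    moreover have "\<phi> x \<le> \<phi>0" using xK by (simp add: K_def)
    ultimately have f: "C + C * norm (x - x0) \<le> C + C * t + C * norm (c - x0)"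
        "- C - C * norm (x - x0) \<le> real_of_ereal (g x)" "q x + real_of_ereal (g x) \<le> \<phi>0"
      unfolding \<phi>_def by (simp_all add: algebra_simps)
    have "\<mu> / 2 * t\<^sup>2 \<le> norm a * t + C * t + (\<phi>0 - k0 + C + C * norm (c - x0))"
      using f ql by linarith
    hence main: "\<mu> / 2 * t\<^sup>2 \<le> (norm a + C) * t + B" unfolding B_def by (simp add: algebra_simps)
    have "t \<le> R"
    proof (cases "t \<le> 1")
      case True thus ?thesis by (simp add: R_def)
    next
      case False
      have "\<bar>B\<bar> * 1 \<le> \<bar>B\<bar> * t" using False by (intro mult_left_mono) auto
      hence "\<mu> / 2 * t\<^sup>2 \<le> P * t" using main unfolding P_def by (simp add: algebra_simps)
      hence "t * (\<mu> / 2 * t) \<le> t * P" by (simp add: power2_eq_square algebra_simps)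
      hence "\<mu> / 2 * t \<le> P" using False by simp
      hence "t \<le> 2 * P / \<mu>" using \<mu> by (simp add: field_simps)
      thus ?thesis by (simp add: R_def)
    qed
    thus "x \<in> cball c R" by (simp add: t_def dist_norm norm_minus_commute)
  qed
  have bK: "bounded K" using bounded_subset[OF bounded_cball Ksub] .
  have cK: "closed K"
    unfolding closed_sequential_limits
  proof (intro allI impI, elim conjE)
    fix X l assume XK: "\<forall>n. X n \<in> K" and Xl: "X \<longlonglongrightarrow> l"
    have qX: "(\<lambda>n. q (X n)) \<longlonglongrightarrow> q l"
      using continuous_on_tendsto_compose[OF q_cont[OF qdef, of UNIV] Xl] by simp
    have le1: "g (X n) \<le> ereal (\<phi>0 - q (X n))" for n
    proof -
      have "X n \<in> edom g" "\<phi> (X n) \<le> \<phi>0" using XK by (auto simp: K_def)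
      thus ?thesis by (subst gfin[OF gg]) (auto simp: \<phi>_def)
    qed
    have lscg: "lsc g" using gg by (simp add: goodg_def)
    have "g l \<le> liminf (\<lambda>n. g (X n))" using lscg Xl unfolding lsc_def by blast
    also have "\<dots> \<le> liminf (\<lambda>n. ereal (\<phi>0 - q (X n)))" by (intro Liminf_mono) (simp add: le1)
    also have "\<dots> = ereal (\<phi>0 - q l)"
      by (intro lim_imp_Liminf) (auto intro!: tendsto_intros qX)
    finally have gl: "g l \<le> ereal (\<phi>0 - q l)" .
    have "g l < \<infinity>" using order_le_less_trans[OF gl, of \<infinity>] by simp
    hence ld: "l \<in> edom g" unfolding edom_def by simp
    hence "ereal (real_of_ereal (g l)) \<le> ereal (\<phi>0 - q l)" using gl gfin[OF gg ld] by simp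
    hence "\<phi> l \<le> \<phi>0" by (simp add: \<phi>_def)
    thus "l \<in> K" using ld by (simp add: K_def)
  qed
  have compK: "compact K" using bK cK by (simp add: compact_eq_bounded_closed)
  have subK: "K \<subseteq> edom g" by (auto simp: K_def)
  have contK: "continuous_on K \<phi>"
    unfolding \<phi>_def
    by (intro continuous_on_add q_cont[OF qdef] continuous_on_subset[OF _ subK]) (use gg in \<open>simp add: goodg_def\<close>)
  obtain xb where xb: "xb \<in> K" "\<And>y. y \<in> K \<Longrightarrow> \<phi> xb \<le> \<phi> y"
    using continuous_attains_inf[OF compK _ contK] x0K by blast
  have xbd: "xb \<in> edom g" using xb(1) by (simp add: K_def)
  have lhs: "ereal (q xb) + g xb = ereal (\<phi> xb)" by (subst gfin[OF gg xbd]) (simp add: \<phi>_def)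
  have "ereal (q xb) + g xb \<le> ereal (q z) + g z" for z
  proof (cases "z \<in> edom g")
    case False thus ?thesis using notdom[OF False] by simp
  next
    case True
    have rhs: "ereal (q z) + g z = ereal (\<phi> z)" by (subst gfin[OF gg True]) (simp add: \<phi>_def)
    have "\<phi> xb \<le> \<phi> z"
    proof (cases "z \<in> K")
      case True thus ?thesis using xb by blast
    next
      case False
      hence "\<phi> z > \<phi>0" using True by (auto simp: K_def)
      moreover have "\<phi> xb \<le> \<phi>0" using xb(2)[OF x0K] by (simp add: \<phi>0_def)
      ultimately show ?thesis by simp
    qed
    thus ?thesis using lhs rhs by simp
  qed
  thus ?thesis by blast
qed

lemma opt_ineq:
  fixes g :: "real^'n \<Rightarrow> ereal" and G :: "real^'n^'n"
  assumes gg: "goodg g" and symG: "Finite_Cartesian_Product.transpose G = G"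
    and qdef: "\<And>x. q x = k0 + a \<bullet> (x - c) + 1/2 * ((x - c) \<bullet> (G *v (x - c)))"
    and mn: "\<And>z. ereal (q xb) + g xb \<le> ereal (q z) + g z"
  shows "xb \<in> edom g \<and> (\<forall>z\<in>edom g. real_of_ereal (g xb) - real_of_ereal (g z) \<le> (a + G *v (xb - c)) \<bullet> (z - xb))"
proof -
  obtain x0 where x0: "x0 \<in> edom g" using dom_ne[OF gg] by blast
  have xbd: "xb \<in> edom g"
  proof (rule ccontr)
    assume "xb \<notin> edom g"
    hence "ereal (q xb) + g xb = \<infinity>" using notdom by simp
    moreover have "ereal (q x0) + g x0 = ereal (q x0 + real_of_ereal (g x0))"
      by (subst gfin[OF gg x0]) simp
    ultimately show False using mn[of x0] by simp
  qed
  have cv: "convex (edom g)" and cvo: "convex_on (edom g) (\<lambda>x. real_of_ereal (g x))"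
    using gg by (auto simp: goodg_def)
  have "real_of_ereal (g xb) - real_of_ereal (g z) \<le> (a + G *v (xb - c)) \<bullet> (z - xb)" if zd: "z \<in> edom g" for z
  proof -
    define v where "v = z - xb"
    define y where "y = xb - c"
    define c0 where "c0 = real_of_ereal (g xb) - real_of_ereal (g z) - (a + G *v y) \<bullet> v"
    have "c0 \<le> t * (v \<bullet> (G *v v) / 2)" if t: "0 < t" "t \<le> 1" for t
    proof -
      define xt where "xt = (1 - t) *\<^sub>R xb + t *\<^sub>R z"
      have xtd: "xt \<in> edom g" unfolding xt_def using t by (intro convexD[OF cv xbd zd]) auto
      have xtv: "xt - c = y + t *\<^sub>R v" by (simp add: xt_def y_def v_def algebra_simps)
      have "ereal (q xb) + g xb \<le> ereal (q xt) + g xt" by (rule mn)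
      hence "ereal (q xb + real_of_ereal (g xb)) \<le> ereal (q xt + real_of_ereal (g xt))"
        by (subst (asm) gfin[OF gg xbd], subst (asm) gfin[OF gg xtd]) simp
      hence m1: "q xb + real_of_ereal (g xb) \<le> q xt + real_of_ereal (g xt)" by simp
      have m2: "real_of_ereal (g xt) \<le> (1 - t) * real_of_ereal (g xb) + t * real_of_ereal (g z)"
        unfolding xt_def by (rule convex_onD[OF cvo]) (use t xbd zd in auto)
      have s1: "y \<bullet> (G *v v) = v \<bullet> (G *v y)" using sym_inner[OF symG] by (simp add: inner_commute)
      have "q xt = k0 + a \<bullet> y + t * (a \<bullet> v) + 1/2 * (y \<bullet> (G *v y) + t * (y \<bullet> (G *v v)) + t * (v \<bullet> (G *v y)) + t\<^sup>2 * (v \<bullet> (G *v v)))"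
        unfolding qdef xtv
        by (simp add: matrix_vector_right_distrib matrix_vector_mult_scaleR inner_add_left inner_add_right power2_eq_square algebra_simps)
      moreover have "q xb = k0 + a \<bullet> y + 1/2 * (y \<bullet> (G *v y))" unfolding qdef y_def ..
      ultimately have qd: "q xt - q xb = t * ((a + G *v y) \<bullet> v) + t\<^sup>2 / 2 * (v \<bullet> (G *v v))"
        using s1 by (simp add: inner_add_left inner_commute[of "G *v y" v] algebra_simps power2_eq_square)
      have "t * c0 \<le> t * (t * (v \<bullet> (G *v v) / 2))"
        using m1 m2 qd unfolding c0_def by (simp add: algebra_simps power2_eq_square)
      thus ?thesis using t by simp
    qed
    hence "c0 \<le> 0" by (rule small_pos_contra)
    thus ?thesis by (simp add: c0_def v_def y_def)
  qed
  thus ?thesis using xbd by blast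
qed

lemma uniq_min:
  fixes g :: "real^'n \<Rightarrow> ereal" and G :: "real^'n^'n"
  assumes gg: "goodg g" and symG: "Finite_Cartesian_Product.transpose G = G" and \<mu>: "\<mu> > 0"
    and coerc: "\<And>d. \<mu> * (norm d)\<^sup>2 \<le> d \<bullet> (G *v d)"
    and qdef: "\<And>x. q x = k0 + a \<bullet> (x - c) + 1/2 * ((x - c) \<bullet> (G *v (x - c)))"
    and m1: "\<And>z. ereal (q x1) + g x1 \<le> ereal (q z) + g z"
    and m2: "\<And>z. ereal (q x2) + g x2 \<le> ereal (q z) + g z"
  shows "x1 = x2"
proof -
  note o1 = opt_ineq[OF gg symG qdef m1] and o2 = opt_ineq[OF gg symG qdef m2]
  have i1: "real_of_ereal (g x1) - real_of_ereal (g x2) \<le> (a + G *v (x1 - c)) \<bullet> (x2 - x1)" using o1 o2 by blast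
  have i2: "real_of_ereal (g x2) - real_of_ereal (g x1) \<le> (a + G *v (x2 - c)) \<bullet> (x1 - x2)" using o1 o2 by blast
  have "(a + G *v (x1 - c)) \<bullet> (x2 - x1) + (a + G *v (x2 - c)) \<bullet> (x1 - x2) = - ((x1 - x2) \<bullet> (G *v (x1 - x2)))"
    by (simp add: matrix_vector_mult_diff_distrib inner_diff_left inner_diff_right inner_add_left inner_commute algebra_simps)
  hence "(x1 - x2) \<bullet> (G *v (x1 - x2)) \<le> 0" using i1 i2 by linarith
  hence "\<mu> * (norm (x1 - x2))\<^sup>2 \<le> 0" using coerc[of "x1 - x2"] by linarith
  hence "(norm (x1 - x2))\<^sup>2 \<le> 0" using \<mu> by (simp add: mult_le_0_iff)
  thus ?thesis by simp
qed



lemma not_diff_fd: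
  assumes "\<not> h differentiable at u"
  shows "frechet_derivative h (at u) = (SOME D. False)"
  using assms unfolding frechet_derivative_def differentiable_def by simp

lemma deriv_line:
  fixes h :: "real^'m \<Rightarrow> real"
  assumes "h differentiable at (q0 + \<sigma> *\<^sub>R axis i 1)"
  shows "((\<lambda>t. h (q0 + t *\<^sub>R axis i 1)) has_derivative (\<lambda>t. t * grad h (q0 + \<sigma> *\<^sub>R axis i 1) $ i)) (at \<sigma>)"
proof -
  let ?q = "q0 + \<sigma> *\<^sub>R axis i 1"
  let ?D = "frechet_derivative h (at ?q)"
  have hD: "(h has_derivative ?D) (at ?q)" using assms frechet_derivative_works by blast
  have lin: "linear ?D" using has_derivative_linear[OF hD] .
  have l: "((\<lambda>t. q0 + t *\<^sub>R axis i 1) has_derivative (\<lambda>t. t *\<^sub>R axis i 1)) (at \<sigma>)"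
    by (auto intro!: derivative_eq_intros)
  have "((\<lambda>t. h (q0 + t *\<^sub>R axis i 1)) has_derivative (\<lambda>t. ?D (t *\<^sub>R axis i 1))) (at \<sigma>)"
    by (rule has_derivative_compose[OF l hD])
  moreover have "?D (t *\<^sub>R axis i 1) = t * grad h ?q $ i" for t
    using linear_scale[OF lin] by (simp add: grad_def)
  ultimately show ?thesis by simp
qed

lemma mvt_diff2:
  fixes h :: "real^'m \<Rightarrow> real"
  assumes s: "0 < s"
    and d: "\<And>\<sigma>. 0 \<le> \<sigma> \<Longrightarrow> \<sigma> \<le> s \<Longrightarrow> h differentiable at (p + \<sigma> *\<^sub>R axis i 1) \<and> h differentiable at (p' + \<sigma> *\<^sub>R axis i 1)"
  shows "\<exists>\<xi>. 0 < \<xi> \<and> \<xi> < s \<and> (h (p' + s *\<^sub>R axis i 1) - h (p + s *\<^sub>R axis i 1)) - (h p' - h p)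
          = s * (grad h (p' + \<xi> *\<^sub>R axis i 1) $ i - grad h (p + \<xi> *\<^sub>R axis i 1) $ i)"
proof -
  define \<phi> where "\<phi> t = h (p' + t *\<^sub>R axis i 1) - h (p + t *\<^sub>R axis i 1)" for t
  define \<phi>' where "\<phi>' \<sigma> = (\<lambda>t. t * (grad h (p' + \<sigma> *\<^sub>R axis i 1) $ i - grad h (p + \<sigma> *\<^sub>R axis i 1) $ i))" for \<sigma>
  have der: "(\<phi> has_derivative \<phi>' \<sigma>) (at \<sigma>)" if "0 \<le> \<sigma>" "\<sigma> \<le> s" for \<sigma>
  proof -
    have "((\<lambda>t. h (p' + t *\<^sub>R axis i 1) - h (p + t *\<^sub>R axis i 1)) has_derivative
       (\<lambda>t. t * grad h (p' + \<sigma> *\<^sub>R axis i 1) $ i - t * grad h (p + \<sigma> *\<^sub>R axis i 1) $ i)) (at \<sigma>)"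
    proof -
      have A: "((\<lambda>t. h (p' + t *\<^sub>R axis i 1)) has_derivative (\<lambda>t. t * grad h (p' + \<sigma> *\<^sub>R axis i 1) $ i)) (at \<sigma>)"
        by (rule deriv_line) (use d[OF that] in blast)
      have B: "((\<lambda>t. h (p + t *\<^sub>R axis i 1)) has_derivative (\<lambda>t. t * grad h (p + \<sigma> *\<^sub>R axis i 1) $ i)) (at \<sigma>)"
        by (rule deriv_line) (use d[OF that] in blast)
      show ?thesis by (rule has_derivative_diff[OF A B])
    qed
    thus ?thesis unfolding \<phi>_def \<phi>'_def by (simp add: algebra_simps)
  qed
  have cont: "continuous_on {0..s} \<phi>"
    using der by (auto intro!: continuous_at_imp_continuous_on has_derivative_continuous)
  have "\<exists>\<xi>. 0 < \<xi> \<and> \<xi> < s \<and> \<phi> s - \<phi> 0 = \<phi>' \<xi> (s - 0)"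
    apply (rule mvt[OF s cont, of \<phi>'])
    subgoal for x using der[of x] by simp
    subgoal for \<xi> by blast
    done
  then obtain \<xi> where "0 < \<xi>" "\<xi> < s" "\<phi> s - \<phi> 0 = \<phi>' \<xi> (s - 0)" by blast
  thus ?thesis unfolding \<phi>_def \<phi>'_def by (intro exI[of _ \<xi>]) (auto simp: algebra_simps)
qed

lemma cone_free:
  fixes h :: "real^'m \<Rightarrow> real"
  assumes Lder: "((\<lambda>y. grad h y $ i0) has_derivative L) (at u0)" and a: "L (axis j0 1) \<noteq> 0"
  shows "\<exists>\<epsilon> \<delta>. 0 < \<epsilon> \<and> \<epsilon> \<le> 1/2 \<and> 0 < \<delta> \<and>
     (\<forall>r u. 0 < r \<and> r < \<delta> \<and> norm (u - (u0 + r *\<^sub>R axis j0 1)) \<le> \<epsilon> * r \<longrightarrow> h differentiable at u)"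
proof -
  define g0 where "g0 = grad h u0 $ i0"
  define cs where "cs = (SOME D. False :: real^'m \<Rightarrow> real) (axis i0 1)"
  have nd: "grad h u $ i0 = cs" if "\<not> h differentiable at u" for u
    using not_diff_fd[OF that] by (simp add: grad_def cs_def)
  have tri: "norm (u - u0) \<le> norm (u - (u0 + r *\<^sub>R axis j0 1)) + r" if "r > 0" for u r
  proof -
    have "norm (u - u0) \<le> norm (u - (u0 + r *\<^sub>R axis j0 1)) + norm (r *\<^sub>R axis j0 1 :: real^'m)"
      using norm_triangle_ineq[of "u - (u0 + r *\<^sub>R axis j0 1)" "r *\<^sub>R axis j0 1"] by (simp add: algebra_simps)
    thus ?thesis using that by simp
  qed
  show ?thesis
  proof (cases "cs = g0")
    case False
    have "continuous (at u0) (\<lambda>y. grad h y $ i0)" using has_derivative_continuous[OF Lder] .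
    hence ce: "\<forall>e>0. \<exists>d>0. \<forall>x'. dist x' u0 < d \<longrightarrow> dist (grad h x' $ i0) g0 < e"
      unfolding continuous_at_eps_delta g0_def .
    have pos: "dist cs g0 > 0" using False by simp
    obtain \<delta>1 where d1: "\<delta>1 > 0" "\<And>u. dist u u0 < \<delta>1 \<Longrightarrow> dist (grad h u $ i0) g0 < dist cs g0"
      using ce pos by blast
    have "\<forall>r u. 0 < r \<and> r < \<delta>1/2 \<and> norm (u - (u0 + r *\<^sub>R axis j0 1)) \<le> 1/2 * r \<longrightarrow> h differentiable at u"
    proof (intro allI impI)
      fix r u assume H: "0 < r \<and> r < \<delta>1/2 \<and> norm (u - (u0 + r *\<^sub>R axis j0 1)) \<le> 1/2 * r"
      hence "norm (u - u0) < \<delta>1" using tri[of r u] by linarith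
      hence "dist (grad h u $ i0) g0 < dist cs g0" using d1 by (simp add: dist_norm)
      thus "h differentiable at u"
      proof (rule contrapos_pp)
        assume "\<not> h differentiable at u"
        thus "\<not> dist (grad h u $ i0) g0 < dist cs g0" using nd by simp
      qed
    qed
    thus ?thesis using d1 by (intro exI[of _ "1/2"] exI[of _ "\<delta>1/2"]) auto
  next
    case True
    define a where "a = L (axis j0 1)"
    have bl: "bounded_linear L" using has_derivative_bounded_linear[OF Lder] .
    obtain M where M: "M > 0" "\<And>x. norm (L x) \<le> norm x * M" using bounded_linear.pos_bounded[OF bl] by blast
    have ap: "\<bar>a\<bar> > 0" using a a_def by simp
    obtain \<delta>0 where d0: "\<delta>0 > 0" "\<And>y. norm (y - u0) < \<delta>0 \<Longrightarrow>
        norm (grad h y $ i0 - grad h u0 $ i0 - L (y - u0)) \<le> \<bar>a\<bar>/8 * norm (y - u0)"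
      using Lder ap unfolding has_derivative_at_alt by (metis divide_pos_pos zero_less_numeral)
    define \<epsilon> where "\<epsilon> = min (1/2) (\<bar>a\<bar> / (4 * M))"
    have e0: "0 < \<epsilon>" "\<epsilon> \<le> 1/2" "\<epsilon> * M \<le> \<bar>a\<bar>/4" using ap M
      by (auto simp: \<epsilon>_def min_def field_simps)
    have "\<forall>r u. 0 < r \<and> r < \<delta>0/2 \<and> norm (u - (u0 + r *\<^sub>R axis j0 1)) \<le> \<epsilon> * r \<longrightarrow> h differentiable at u"
    proof (intro allI impI)
      fix r u assume H: "0 < r \<and> r < \<delta>0/2 \<and> norm (u - (u0 + r *\<^sub>R axis j0 1)) \<le> \<epsilon> * r"
      define dd where "dd = u - (u0 + r *\<^sub>R axis j0 1)"
      have "\<epsilon> * r \<le> 1/2 * r" using e0 H by (intro mult_right_mono) auto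
      hence nu: "norm (u - u0) \<le> 3/2 * r" using tri[of r u] H by linarith
      hence nu2: "norm (u - u0) < \<delta>0" using H by linarith
      have Ld: "\<bar>L dd\<bar> \<le> \<bar>a\<bar>/4 * r"
      proof -
        have "\<bar>L dd\<bar> \<le> norm dd * M" using M(2)[of dd] by simp
        also have "\<dots> \<le> \<epsilon> * r * M" using H M by (simp add: dd_def mult_right_mono)
        also have "\<dots> = (\<epsilon> * M) * r" by simp
        also have "\<dots> \<le> \<bar>a\<bar>/4 * r" using e0 H by (intro mult_right_mono) auto
        finally show ?thesis .
      qed
      have Lu: "L (u - u0) = r * a + L dd"
      proof -
        have "u - u0 = r *\<^sub>R axis j0 1 + dd" by (simp add: dd_def)
        thus ?thesis using linear_add[OF bounded_linear.linear[OF bl]] linear_scale[OF bounded_linear.linear[OF bl]]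
          by (simp add: a_def)
      qed
      show "h differentiable at u"
      proof (rule ccontr)
        assume "\<not> h differentiable at u"
        hence "grad h u $ i0 = grad h u0 $ i0" using nd True g0_def by simp
        hence "\<bar>L (u - u0)\<bar> \<le> \<bar>a\<bar>/8 * norm (u - u0)" using d0(2)[OF nu2] by simp
        also have "\<dots> \<le> \<bar>a\<bar>/8 * (3/2 * r)" using nu ap by (intro mult_left_mono) auto
        also have "\<dots> = 3/16 * (r * \<bar>a\<bar>)" by simp
        finally have X: "\<bar>r * a + L dd\<bar> \<le> 3/16 * (r * \<bar>a\<bar>)" using Lu by simp
        have Y: "\<bar>r * a\<bar> = r * \<bar>a\<bar>" using H by (simp add: abs_mult)
        have Z: "\<bar>L dd\<bar> \<le> 1/4 * (r * \<bar>a\<bar>)" using Ld by (simp add: algebra_simps)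
        have P: "r * \<bar>a\<bar> > 0" using H ap by simp
        have "\<bar>r * a\<bar> \<le> \<bar>r * a + L dd\<bar> + \<bar>L dd\<bar>" by arith
        thus False using X Y Z P by linarith
      qed
    qed
    thus ?thesis using d0 e0 by (intro exI[of _ \<epsilon>] exI[of _ "\<delta>0/2"]) auto
  qed
qed


lemma approx2:
  fixes f :: "real^'m \<Rightarrow> real"
  assumes bl: "bounded_linear L" and k: "\<kappa> \<ge> 0"
    and ap: "\<And>y. norm (y - u0) < \<delta> \<Longrightarrow> norm (f y - f u0 - L (y - u0)) \<le> \<kappa> * norm (y - u0)"
    and q: "norm (q1 - u0) < \<delta>" "norm (q2 - u0) < \<delta>" "norm (q1 - u0) \<le> R" "norm (q2 - u0) \<le> R"
  shows "\<bar>f q1 - f q2 - L (q1 - q2)\<bar> \<le> 2 * \<kappa> * R"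
proof -
  have lin: "linear L" using bounded_linear.linear[OF bl] .
  have e: "L (q1 - q2) = L (q1 - u0) - L (q2 - u0)"
    using linear_diff[OF lin, of "q1 - u0" "q2 - u0"] by simp
  have a1: "\<bar>f q1 - f u0 - L (q1 - u0)\<bar> \<le> \<kappa> * R"
    using ap[OF q(1)] mult_left_mono[OF q(3) k] by simp
  have a2: "\<bar>f q2 - f u0 - L (q2 - u0)\<bar> \<le> \<kappa> * R"
    using ap[OF q(2)] mult_left_mono[OF q(4) k] by simp
  show ?thesis using a1 a2 e by linarith
qed

lemma hess_symmetric:
  fixes h :: "real^'m \<Rightarrow> real"
  assumes dg: "\<And>i. (\<lambda>y. grad h y $ i) differentiable at u0"
  shows "Finite_Cartesian_Product.transpose (hess h u0) = hess h u0"
proof -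
  define L where "L i = frechet_derivative (\<lambda>y. grad h y $ i) (at u0)" for i
  have Lder: "((\<lambda>y. grad h y $ i) has_derivative L i) (at u0)" for i
    using dg[of i] unfolding L_def frechet_derivative_works .
  have bl: "bounded_linear (L i)" for i using has_derivative_bounded_linear[OF Lder] .
  have J: "hess h u0 $ i $ j = L i (axis j 1)" for i j by (simp add: hess_def L_def)
  have symL: "L i (axis j 1) = L j (axis i 1)" for i j
  proof (rule ccontr)
    assume ne: "L i (axis j 1) \<noteq> L j (axis i 1)"
    obtain i0 j0 where a0: "L i0 (axis j0 1) \<noteq> 0"
      using ne by metis
    obtain \<epsilon> \<delta> where ed: "0 < \<epsilon>" "\<epsilon> \<le> 1/2" "0 < \<delta>"
      and free: "\<And>r u. 0 < r \<Longrightarrow> r < \<delta> \<Longrightarrow> norm (u - (u0 + r *\<^sub>R axis j0 1)) \<le> \<epsilon> * r \<Longrightarrow> h differentiable at u"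
      using cone_free[OF Lder[of i0] a0] by blast
    define d where "d = \<bar>L i (axis j 1) - L j (axis i 1)\<bar>"
    have dpos: "d > 0" using ne by (simp add: d_def)
    define \<kappa> where "\<kappa> = d * \<epsilon> / 100"
    have kpos: "\<kappa> > 0" using dpos ed by (simp add: \<kappa>_def)
    obtain \<delta>i where di: "\<delta>i > 0" "\<And>y. norm (y - u0) < \<delta>i \<Longrightarrow>
        norm (grad h y $ i - grad h u0 $ i - L i (y - u0)) \<le> \<kappa> * norm (y - u0)"
      using Lder[of i] kpos unfolding has_derivative_at_alt by blast
    obtain \<delta>j where dj: "\<delta>j > 0" "\<And>y. norm (y - u0) < \<delta>j \<Longrightarrow>
        norm (grad h y $ j - grad h u0 $ j - L j (y - u0)) \<le> \<kappa> * norm (y - u0)"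
      using Lder[of j] kpos unfolding has_derivative_at_alt by blast
    define r where "r = min \<delta> (min \<delta>i \<delta>j) / 3"
    have r: "0 < r" "r < \<delta>" "2 * r < \<delta>i" "2 * r < \<delta>j"
      using ed di dj by (auto simp: r_def)
    define p where "p = u0 + r *\<^sub>R axis j0 1"
    define s where "s = \<epsilon> * r / 3"
    have s: "0 < s" "2 * s \<le> \<epsilon> * r" "2 * s \<le> r" using ed r by (auto simp: s_def)
    define ei where "ei = (axis i 1 :: real^'m)"
    define ej where "ej = (axis j 1 :: real^'m)"
    have nei: "norm ei = 1" "norm ej = 1" by (auto simp: ei_def ej_def)
    have near: "norm (q - p) \<le> 2 * s \<Longrightarrow> h differentiable at q \<and> norm (q - u0) \<le> 2 * r \<and> norm (q - u0) < \<delta>i \<and> norm (q - u0) < \<delta>j" for q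
    proof -
      assume q: "norm (q - p) \<le> 2 * s"
      have "h differentiable at q" using free[OF r(1) r(2), of q] q s unfolding p_def by linarith
      moreover have "norm (q - u0) \<le> norm (q - p) + r"
        using norm_triangle_ineq[of "q - p" "r *\<^sub>R axis j0 1"] r(1) by (simp add: p_def algebra_simps)
      ultimately show ?thesis using q s r by linarith
    qed
    have seg: "norm (c1 *\<^sub>R ei + c2 *\<^sub>R ej) \<le> 2 * s" if "0 \<le> c1" "c1 \<le> s" "0 \<le> c2" "c2 \<le> s" for c1 c2
    proof -
      have "norm (c1 *\<^sub>R ei + c2 *\<^sub>R ej) \<le> norm (c1 *\<^sub>R ei) + norm (c2 *\<^sub>R ej)" by (rule norm_triangle_ineq)
      also have "\<dots> = c1 + c2" using that nei by simp
      finally show ?thesis using that by linarith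
    qed
    have Di: "h differentiable at (q0 + \<sigma> *\<^sub>R ei)" if "q0 = p \<or> q0 = p + s *\<^sub>R ej" "0 \<le> \<sigma>" "\<sigma> \<le> s" for q0 \<sigma>
    proof -
      have "norm ((q0 + \<sigma> *\<^sub>R ei) - p) \<le> 2 * s"
        using that seg[of \<sigma> 0] seg[of \<sigma> s] s by (auto simp: algebra_simps)
      thus ?thesis using near by blast
    qed
    have Dj: "h differentiable at (q0 + \<sigma> *\<^sub>R ej)" if "q0 = p \<or> q0 = p + s *\<^sub>R ei" "0 \<le> \<sigma>" "\<sigma> \<le> s" for q0 \<sigma>
    proof -
      have "norm ((q0 + \<sigma> *\<^sub>R ej) - p) \<le> 2 * s"
        using that seg[of 0 \<sigma>] seg[of s \<sigma>] s by (auto simp: algebra_simps)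
      thus ?thesis using near by blast
    qed
    define \<Delta> where "\<Delta> = h (p + s *\<^sub>R ei + s *\<^sub>R ej) - h (p + s *\<^sub>R ei) - h (p + s *\<^sub>R ej) + h p"
    obtain \<xi> where xi: "0 < \<xi>" "\<xi> < s" "(h (p + s *\<^sub>R ej + s *\<^sub>R ei) - h (p + s *\<^sub>R ei)) - (h (p + s *\<^sub>R ej) - h p)
          = s * (grad h (p + s *\<^sub>R ej + \<xi> *\<^sub>R ei) $ i - grad h (p + \<xi> *\<^sub>R ei) $ i)"
      using mvt_diff2[OF s(1), of h p i "p + s *\<^sub>R ej"] Di unfolding ei_def by blast
    obtain \<zeta> where zeta: "0 < \<zeta>" "\<zeta> < s" "(h (p + s *\<^sub>R ei + s *\<^sub>R ej) - h (p + s *\<^sub>R ej)) - (h (p + s *\<^sub>R ei) - h p)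
          = s * (grad h (p + s *\<^sub>R ei + \<zeta> *\<^sub>R ej) $ j - grad h (p + \<zeta> *\<^sub>R ej) $ j)"
      using mvt_diff2[OF s(1), of h p j "p + s *\<^sub>R ei"] Dj unfolding ej_def by blast
    have D1: "\<Delta> = s * (grad h (p + s *\<^sub>R ej + \<xi> *\<^sub>R ei) $ i - grad h (p + \<xi> *\<^sub>R ei) $ i)"
      using xi(3) unfolding \<Delta>_def by (simp add: algebra_simps)
    have D2: "\<Delta> = s * (grad h (p + s *\<^sub>R ei + \<zeta> *\<^sub>R ej) $ j - grad h (p + \<zeta> *\<^sub>R ej) $ j)"
      using zeta(3) unfolding \<Delta>_def by (simp add: algebra_simps)
    have E1: "\<bar>grad h (p + s *\<^sub>R ej + \<xi> *\<^sub>R ei) $ i - grad h (p + \<xi> *\<^sub>R ei) $ i - s * L i (axis j 1)\<bar> \<le> 2 * \<kappa> * (2 * r)"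
    proof -
      let ?q1 = "p + s *\<^sub>R ej + \<xi> *\<^sub>R ei" and ?q2 = "p + \<xi> *\<^sub>R ei"
      have n1: "norm (?q1 - p) \<le> 2 * s" using seg[of \<xi> s] xi s by (simp add: algebra_simps)
      have n2: "norm (?q2 - p) \<le> 2 * s" using seg[of \<xi> 0] xi s by (simp add: algebra_simps)
      have "L i (?q1 - ?q2) = s * L i (axis j 1)"
        using linear_scale[OF bounded_linear.linear[OF bl[of i]]] by (simp add: ej_def)
      moreover have "\<bar>grad h ?q1 $ i - grad h ?q2 $ i - L i (?q1 - ?q2)\<bar> \<le> 2 * \<kappa> * (2 * r)"
        by (rule approx2[OF bl[of i] _ di(2)]) (use kpos near[OF n1] near[OF n2] in auto)
      ultimately show ?thesis by simp
    qed
    have E2: "\<bar>grad h (p + s *\<^sub>R ei + \<zeta> *\<^sub>R ej) $ j - grad h (p + \<zeta> *\<^sub>R ej) $ j - s * L j (axis i 1)\<bar> \<le> 2 * \<kappa> * (2 * r)"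
    proof -
      let ?q1 = "p + s *\<^sub>R ei + \<zeta> *\<^sub>R ej" and ?q2 = "p + \<zeta> *\<^sub>R ej"
      have n1: "norm (?q1 - p) \<le> 2 * s" using seg[of s \<zeta>] zeta s by (simp add: algebra_simps)
      have n2: "norm (?q2 - p) \<le> 2 * s" using seg[of 0 \<zeta>] zeta s by (simp add: algebra_simps)
      have "L j (?q1 - ?q2) = s * L j (axis i 1)"
        using linear_scale[OF bounded_linear.linear[OF bl[of j]]] by (simp add: ei_def)
      moreover have "\<bar>grad h ?q1 $ j - grad h ?q2 $ j - L j (?q1 - ?q2)\<bar> \<le> 2 * \<kappa> * (2 * r)"
        by (rule approx2[OF bl[of j] _ dj(2)]) (use kpos near[OF n1] near[OF n2] in auto)
      ultimately show ?thesis by simp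
    qed
    have "s * \<bar>s * L i (axis j 1) - s * L j (axis i 1)\<bar> \<le> s * (8 * \<kappa> * r)"
    proof -
      have "\<bar>s * L i (axis j 1) - s * L j (axis i 1)\<bar> \<le> 8 * \<kappa> * r"
      proof -
        have XY: "grad h (p + s *\<^sub>R ej + \<xi> *\<^sub>R ei) $ i - grad h (p + \<xi> *\<^sub>R ei) $ i
              = grad h (p + s *\<^sub>R ei + \<zeta> *\<^sub>R ej) $ j - grad h (p + \<zeta> *\<^sub>R ej) $ j"
          using D1 D2 s(1) by simp
        show ?thesis using E1 E2 XY by linarith
      qed
      thus ?thesis using s(1) by (simp add: mult_left_mono)
    qed
    hence "s * (s * d) \<le> s * (8 * \<kappa> * r)"
      by (simp add: d_def abs_mult right_diff_distrib[symmetric] s(1) less_imp_le)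
    hence "s * d \<le> 8 * \<kappa> * r" using s(1) by simp
    hence "\<epsilon> * r * d / 3 \<le> 8 * (d * \<epsilon> / 100) * r" by (simp add: s_def \<kappa>_def)
    moreover have "\<epsilon> * r * d > 0" using ed r dpos by simp
    ultimately show False by (simp add: field_simps)
  qed
  show ?thesis
    by (simp add: vec_eq_iff transpose_def J symL)
qed



lemma lin_expand:
  fixes D :: "real^'m \<Rightarrow> real"
  assumes lin: "linear D"
  shows "D w = (\<Sum>k\<in>UNIV. w $ k * D (axis k 1))"
proof -
  have "w = (\<Sum>k\<in>UNIV. w $ k *\<^sub>R axis k 1)"
    using basis_expansion[of w] by (simp add: scalar_mult_eq_scaleR)
  hence "D w = D (\<Sum>k\<in>UNIV. w $ k *\<^sub>R axis k 1)" by (rule arg_cong)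
  also have "\<dots> = (\<Sum>k\<in>UNIV. D (w $ k *\<^sub>R axis k 1))" by (rule linear_sum[OF lin])
  also have "\<dots> = (\<Sum>k\<in>UNIV. w $ k * D (axis k 1))"
    using linear_scale[OF lin] by simp
  finally show ?thesis .
qed

lemma affine_der:
  fixes A :: "real^'n^'m"
  shows "((\<lambda>x. A *v x - b) has_derivative (\<lambda>v. A *v v)) (at y)"
proof -
  have "((\<lambda>x. A *v x) has_derivative (\<lambda>v. A *v v)) (at y)"
    using bounded_linear.has_derivative[OF matrix_vector_mul_bounded_linear[of A] has_derivative_ident] by simp
  from has_derivative_diff[OF this has_derivative_const[of b]] show ?thesis by simp
qed

lemma grad_comp:
  fixes A :: "real^'n^'m" and h :: "real^'m \<Rightarrow> real"
  assumes dh: "h differentiable at (A *v y - b)"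
  shows "grad (\<lambda>x. h (A *v x - b)) y $ i = (\<Sum>k\<in>UNIV. A $ k $ i * grad h (A *v y - b) $ k)"
proof -
  let ?u = "A *v y - b"
  let ?D = "frechet_derivative h (at ?u)"
  have hD: "(h has_derivative ?D) (at ?u)" using dh frechet_derivative_works by blast
  have c: "((\<lambda>x. h (A *v x - b)) has_derivative (\<lambda>v. ?D (A *v v))) (at y)"
    by (rule has_derivative_compose[OF affine_der hD])
  have fd: "frechet_derivative (\<lambda>x. h (A *v x - b)) (at y) = (\<lambda>v. ?D (A *v v))"
    using frechet_derivative_at[OF c] by simp
  have "grad (\<lambda>x. h (A *v x - b)) y $ i = ?D (A *v axis i 1)" by (simp add: grad_def fd)
  also have "\<dots> = (\<Sum>k\<in>UNIV. (A *v axis i 1) $ k * ?D (axis k 1))"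
    by (rule lin_expand[OF has_derivative_linear[OF hD]])
  also have "\<dots> = (\<Sum>k\<in>UNIV. A $ k $ i * grad h ?u $ k)"
    by (simp add: matrix_vector_mult_basis column_def grad_def)
  finally show ?thesis .
qed

lemma hess_comp:
  fixes A :: "real^'n^'m" and h :: "real^'m \<Rightarrow> real"
  assumes U: "open U" "y \<in> U"
    and dh: "\<And>x. x \<in> U \<Longrightarrow> h differentiable at (A *v x - b)"
    and dg: "\<And>k. (\<lambda>u. grad h u $ k) differentiable at (A *v y - b)"
  shows "hess (\<lambda>x. h (A *v x - b)) y = Finite_Cartesian_Product.transpose A ** hess h (A *v y - b) ** A"
proof -
  let ?u = "A *v y - b"
  define L where "L k = frechet_derivative (\<lambda>u. grad h u $ k) (at ?u)" for k
  have Lder: "((\<lambda>u. grad h u $ k) has_derivative L k) (at ?u)" for k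
    using dg[of k] unfolding L_def frechet_derivative_works .
  have Hk: "hess h ?u $ k $ p = L k (axis p 1)" for k p by (simp add: hess_def L_def)
  have entry: "hess (\<lambda>x. h (A *v x - b)) y $ i $ l = (\<Sum>k\<in>UNIV. A $ k $ i * L k (A *v axis l 1))" for i l
  proof -
    have c: "((\<lambda>x. grad h (A *v x - b) $ k) has_derivative (\<lambda>v. L k (A *v v))) (at y)" for k
      by (rule has_derivative_compose[OF affine_der Lder])
    have s: "((\<lambda>x. \<Sum>k\<in>UNIV. A $ k $ i * grad h (A *v x - b) $ k) has_derivative
          (\<lambda>v. \<Sum>k\<in>UNIV. A $ k $ i * L k (A *v v))) (at y)"
      by (intro has_derivative_sum has_derivative_mult_right c)
    have t: "((\<lambda>x. grad (\<lambda>x. h (A *v x - b)) x $ i) has_derivative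
          (\<lambda>v. \<Sum>k\<in>UNIV. A $ k $ i * L k (A *v v))) (at y)"
      by (rule has_derivative_transform_within_open[OF s U]) (simp add: grad_comp dh)
    show ?thesis by (simp add: hess_def frechet_derivative_at[OF t, symmetric])
  qed
  have lk: "L k w = (\<Sum>p\<in>UNIV. w $ p * hess h ?u $ k $ p)" for k w
    by (subst lin_expand[OF has_derivative_linear[OF Lder[of k]]]) (simp add: Hk)
  have "hess (\<lambda>x. h (A *v x - b)) y $ i $ l = (Finite_Cartesian_Product.transpose A ** hess h ?u ** A) $ i $ l" for i l
  proof -
    have "(\<Sum>k\<in>UNIV. A $ k $ i * L k (A *v axis l 1)) = (\<Sum>k\<in>UNIV. \<Sum>p\<in>UNIV. A $ k $ i * (A $ p $ l * hess h ?u $ k $ p))"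
      by (simp add: lk matrix_vector_mult_basis column_def sum_distrib_left)
    also have "\<dots> = (\<Sum>p\<in>UNIV. \<Sum>k\<in>UNIV. A $ k $ i * hess h ?u $ k $ p * A $ p $ l)"
      by (subst sum.swap) (simp add: algebra_simps)
    also have "\<dots> = (Finite_Cartesian_Product.transpose A ** hess h ?u ** A) $ i $ l"
      by (simp add: matrix_matrix_mult_def transpose_def sum_distrib_right)
    finally show ?thesis by (simp add: entry)
  qed
  thus ?thesis by (simp add: vec_eq_iff)
qed


theorem lemma4p4:
  fixes A :: "real^'n^'m" and b :: "real^'m"
    and psi :: "real^'m \<Rightarrow> ereal" and g :: "real^'n \<Rightarrow> ereal"
    and U :: "(real^'n) set"
    and a1 a2 \<rho> \<tau> \<eta> \<beta> \<sigma> :: real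
    and x y :: "nat \<Rightarrow> real^'n" and k :: nat
  assumes psi_proper: "proper psi" and psi_lsc: "lsc psi"
    and g_proper: "proper g" and g_lsc: "lsc g"
    and O_open: "open U" and dom_sub: "edom g \<subseteq> U"
    and psi_C2: "C2_on ((\<lambda>x. A *v x - b) ` U) (\<lambda>u. real_of_ereal (psi u))"
    and g_convex: "convex (edom g)" "convex_on (edom g) (\<lambda>x. real_of_ereal (g x))"
    and g_cont: "continuous_on (edom g) (\<lambda>x. real_of_ereal (g x))"
    and F_inf: "(INF z. Fobj A b psi g z) > -\<infinity>"
    and F_lvlbd: "\<forall>c. bounded {z. Fobj A b psi g z \<le> ereal c}"
    and a1: "a1 \<ge> 1" and a2: "a2 > 0"
    and rho: "0 < \<rho>" "\<rho> < 1" and tau: "\<tau> \<ge> \<rho>"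
    and eta: "0 < \<eta>" "\<eta> < 1" and beta: "0 < \<beta>" "\<beta> < 1"
    and sigma: "0 < \<sigma>" "\<sigma> < 1"
    and gen: "generated_seq A b psi g a1 a2 \<rho> \<tau> \<eta> \<beta> \<sigma> x y"
  shows "(\<exists>!xb. \<forall>z. Theta A b psi g a1 a2 \<rho> (x k) xb \<le> Theta A b psi g a1 a2 \<rho> (x k) z)
       \<and> (\<forall>xb. (\<forall>z. Theta A b psi g a1 a2 \<rho> (x k) xb \<le> Theta A b psi g a1 a2 \<rho> (x k) z) \<longrightarrow>
             norm (y k - xb) \<le> inverse a2 * \<eta> * (1 + spec_norm (Gmat A b psi g a1 a2 \<rho> (x k)))
                               * (resid A b psi g (x k)) powr (1 + \<tau> - \<rho>))"
  proof -
  define h where "h = (\<lambda>u. real_of_ereal (psi u))"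
  have gg: "goodg g" using g_proper g_lsc g_convex g_cont by (simp add: goodg_def)
  have step: "\<exists>M::nat. x (Suc j) = y j \<or> x (Suc j) = x j + (\<beta> ^ M) *\<^sub>R (y j - x j)" for j
    using gen unfolding generated_seq_def Let_def by (auto split: if_splits)
  have ydom: "y j \<in> edom g" for j using gen unfolding generated_seq_def by blast
  have xdom: "x j \<in> edom g" for j
  proof (induction j)
    case 0 thus ?case using gen unfolding generated_seq_def by blast
  next
    case (Suc j)
    obtain M :: nat where M: "x (Suc j) = y j \<or> x (Suc j) = x j + (\<beta> ^ M) *\<^sub>R (y j - x j)" using step by blast
    have b1: "0 \<le> \<beta> ^ M" "\<beta> ^ M \<le> 1" using beta by (auto intro: power_le_one)
    have "x j + (\<beta> ^ M) *\<^sub>R (y j - x j) = (1 - \<beta> ^ M) *\<^sub>R x j + (\<beta> ^ M) *\<^sub>R y j"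
      by (simp add: algebra_simps)
    also have "\<dots> \<in> edom g" using b1 by (intro convexD[OF g_convex(1) Suc ydom]) auto
    finally show ?case using M ydom by metis
  qed
  define xk where "xk = x k"
  define u0 where "u0 = A *v xk - b"
  have xU: "xk \<in> U" using xdom dom_sub by (auto simp: xk_def)
  have dh: "\<And>z. z \<in> U \<Longrightarrow> h differentiable at (A *v z - b)"
    using psi_C2 unfolding C2_on_def h_def by blast
  have dg: "\<And>i. (\<lambda>v. grad h v $ i) differentiable at u0"
    using psi_C2 xU unfolding C2_on_def h_def u0_def by blast
  define H where "H = hess h u0"
  have Hsym: "Finite_Cartesian_Product.transpose H = H" unfolding H_def by (rule hess_symmetric[OF dg])
  have fr: "freal A b psi = (\<lambda>z. h (A *v z - b))" by (rule ext) (simp add: freal_def h_def)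
  have hf: "hess (freal A b psi) xk = Finite_Cartesian_Product.transpose A ** H ** A"
    unfolding fr H_def u0_def by (rule hess_comp[OF O_open xU dh dg[unfolded u0_def]])
  define r where "r = resid A b psi g xk"
  have rpos: "r > 0" using gen unfolding generated_seq_def r_def xk_def by blast
  define \<mu> where "\<mu> = mu A b psi g a2 \<rho> xk"
  have mueq: "\<mu> = a2 * r powr \<rho>" by (simp add: \<mu>_def mu_def r_def)
  have mupos: "\<mu> > 0" using a2 rpos by (simp add: mueq)
  define cc where "cc = a1 * max 0 (- lambda_min H)"
  define G where "G = Gmat A b psi g a1 a2 \<rho> xk"
  have Geq: "G = Finite_Cartesian_Product.transpose A ** H ** A + cc *\<^sub>R (Finite_Cartesian_Product.transpose A ** A) + \<mu> *\<^sub>R mat 1"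
    unfolding G_def Gmat_def hf cc_def \<mu>_def H_def u0_def h_def by simp
  have symG: "Finite_Cartesian_Product.transpose G = G"
    unfolding Geq transpose_add_mat transpose_scalar matrix_transpose_mul transpose_transpose transpose_mat Hsym
    by (simp add: matrix_mul_assoc)
  have coerc: "\<mu> * (norm d)\<^sup>2 \<le> d \<bullet> (G *v d)" for d
  proof -
    have tA: "d \<bullet> (Finite_Cartesian_Product.transpose A *v v) = (A *v d) \<bullet> v" for v
      by (metis dot_lmul_matrix vector_transpose_matrix)
    have tA2: "d \<bullet> (v v* A) = (A *v d) \<bullet> v" for v
      by (metis dot_lmul_matrix inner_commute)
    have "d \<bullet> (G *v d) = (A *v d) \<bullet> (H *v (A *v d)) + cc * ((A *v d) \<bullet> (A *v d)) + \<mu> * (d \<bullet> d)"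
      unfolding Geq
      by (simp add: matrix_vector_mult_add_rdistrib scaleR_matrix_vector_assoc[symmetric] 
            matrix_vector_mul_assoc[symmetric] tA tA2 inner_add_right)
    moreover have "lambda_min H * (norm (A *v d))\<^sup>2 \<le> (A *v d) \<bullet> (H *v (A *v d))"
      by (rule rayleigh_min[OF Hsym])
    moreover have "0 \<le> (lambda_min H + cc) * (norm (A *v d))\<^sup>2"
    proof -
      have "max 0 (- lambda_min H) \<le> a1 * max 0 (- lambda_min H)"
        using a1 by (simp add: mult_le_cancel_right1)
      hence "0 \<le> lambda_min H + cc" unfolding cc_def by linarith
      thus ?thesis by simp
    qed
    ultimately show ?thesis by (simp add: power2_norm_eq_inner algebra_simps)
  qed
  define gr where "gr = grad (freal A b psi) xk"
  define qT where "qT z = freal A b psi xk + gr \<bullet> (z - xk) + 1/2 * ((z - xk) \<bullet> (G *v (z - xk)))" for z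
  have qTdef: "\<And>z. qT z = freal A b psi xk + gr \<bullet> (z - xk) + 1/2 * ((z - xk) \<bullet> (G *v (z - xk)))"
    by (simp add: qT_def)
  have Th: "Theta A b psi g a1 a2 \<rho> (x k) z = ereal (qT z) + g z" for z
    by (simp add: Theta_def qT_def gr_def G_def xk_def)
  have P1: "\<exists>!xb. \<forall>z. Theta A b psi g a1 a2 \<rho> (x k) xb \<le> Theta A b psi g a1 a2 \<rho> (x k) z"
    unfolding Th
  proof -
    obtain xb where xb: "\<forall>z. ereal (qT xb) + g xb \<le> ereal (qT z) + g z"
      using exist_min[OF gg mupos coerc qTdef] by blast
    show "\<exists>!xb. \<forall>z. ereal (qT xb) + g xb \<le> ereal (qT z) + g z"
    proof (rule ex1I[of _ xb])
      show "\<forall>z. ereal (qT xb) + g xb \<le> ereal (qT z) + g z" by (rule xb)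
    next
      fix x2 assume "\<forall>z. ereal (qT x2) + g x2 \<le> ereal (qT z) + g z"
      thus "x2 = xb" using uniq_min[OF gg symG mupos coerc qTdef] xb by blast
    qed
  qed
  have P2: "norm (y k - xb) \<le> inverse a2 * \<eta> * (1 + spec_norm G) * r powr (1 + \<tau> - \<rho>)"
    if xbmin: "\<forall>z. Theta A b psi g a1 a2 \<rho> (x k) xb \<le> Theta A b psi g a1 a2 \<rho> (x k) z" for xb
  proof -
    define yy where "yy = y k"
    define w where "w = yy - gr - G *v (yy - xk)"
    define qp where "qp z = 1/2 * (norm (z - w))\<^sup>2" for z
    have qpdef: "\<And>z. qp z = 0 + 0 \<bullet> (z - w) + 1/2 * ((z - w) \<bullet> (mat 1 *v (z - w)))"
      by (simp add: qp_def power2_norm_eq_inner)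
    have one: "(1::real) * (norm d)\<^sup>2 \<le> d \<bullet> (mat 1 *v d)" for d :: "real^'n"
      by (simp add: power2_norm_eq_inner)
    have sym1: "Finite_Cartesian_Product.transpose (mat 1 :: real^'n^'n) = mat 1" by (rule transpose_mat)
    have ex1: "\<exists>!z. \<forall>v. ereal (qp z) + g z \<le> ereal (qp v) + g v"
    proof -
      obtain z0 where z0: "\<forall>v. ereal (qp z0) + g z0 \<le> ereal (qp v) + g v"
        using exist_min[OF gg zero_less_one one qpdef] by blast
      show ?thesis
      proof (rule ex1I[of _ z0])
        show "\<forall>v. ereal (qp z0) + g z0 \<le> ereal (qp v) + g v" by (rule z0)
      next
        fix x2 assume "\<forall>v. ereal (qp x2) + g x2 \<le> ereal (qp v) + g v"
        thus "x2 = z0" using uniq_min[OF gg sym1 zero_less_one one qpdef] z0 by blast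
      qed
    qed
    define yt where "yt = prox g w"
    have ytmin: "\<forall>v. ereal (qp yt) + g yt \<le> ereal (qp v) + g v"
      unfolding yt_def prox_def qp_def using theI'[OF ex1[unfolded qp_def]] by simp
    have xbmin': "\<And>z. ereal (qT xb) + g xb \<le> ereal (qT z) + g z" using xbmin by (simp add: Th)
    note o1 = opt_ineq[OF gg symG qTdef xbmin']
    note o2 = opt_ineq[OF gg sym1 qpdef ytmin[rule_format]]
    have i1: "real_of_ereal (g xb) - real_of_ereal (g yt) \<le> (gr + G *v (xb - xk)) \<bullet> (yt - xb)"
      using o1 o2 by blast
    have i2: "real_of_ereal (g yt) - real_of_ereal (g xb) \<le> (0 + mat 1 *v (yt - w)) \<bullet> (xb - yt)"
      using o1 o2 by blast
    define e where "e = yy - yt"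
    define dd where "dd = yy - xb"
    define P where "P = G *v (yy - xk)"
    define Q where "Q = G *v dd"
    have GxbP: "G *v (xb - xk) = P - Q"
    proof -
      have "xb - xk = (yy - xk) - dd" by (simp add: dd_def)
      thus ?thesis by (simp add: P_def Q_def matrix_vector_mult_diff_distrib)
    qed
    have ident: "(gr + G *v (xb - xk)) \<bullet> (yt - xb) + (0 + mat 1 *v (yt - w)) \<bullet> (xb - yt)
        = e \<bullet> dd - e \<bullet> e - Q \<bullet> dd + Q \<bullet> e"
    proof -
      have a1': "yt - xb = dd - e" by (simp add: dd_def e_def)
      have a2': "xb - yt = e - dd" by (simp add: dd_def e_def)
      have a3': "yt - w = gr + P - e" by (simp add: w_def P_def e_def)
      show ?thesis unfolding GxbP a1' a2' a3'
        by (simp add: inner_add_left inner_add_right inner_diff_left inner_diff_right inner_commute algebra_simps)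
    qed
    have key: "dd \<bullet> (G *v dd) \<le> e \<bullet> dd + Q \<bullet> e"
    proof -
      have "0 \<le> e \<bullet> dd - e \<bullet> e - Q \<bullet> dd + Q \<bullet> e" using i1 i2 ident by linarith
      moreover have "0 \<le> e \<bullet> e" by simp
      ultimately have "Q \<bullet> dd \<le> e \<bullet> dd + Q \<bullet> e" by linarith
      moreover have "dd \<bullet> (G *v dd) = Q \<bullet> dd" by (simp add: Q_def inner_commute)
      ultimately show ?thesis by simp
    qed
    define S where "S = spec_norm G"
    have blG: "bounded_linear (\<lambda>v. G *v v)" by (rule matrix_vector_mul_bounded_linear)
    have S0: "0 \<le> S" unfolding S_def spec_norm_def by (rule onorm_pos_le[OF blG])
    have nQ: "norm Q \<le> S * norm dd" unfolding Q_def S_def spec_norm_def by (rule onorm[OF blG])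
    have "e \<bullet> dd + Q \<bullet> e \<le> norm e * norm dd + norm Q * norm e"
      using Cauchy_Schwarz_ineq2[of e dd] Cauchy_Schwarz_ineq2[of Q e] by linarith
    also have "\<dots> \<le> norm e * norm dd + S * norm dd * norm e"
      using nQ by (simp add: mult_right_mono)
    finally have "\<mu> * (norm dd)\<^sup>2 \<le> (1 + S) * norm e * norm dd"
      using coerc[of dd] key by (simp add: algebra_simps)
    hence mdd: "\<mu> * norm dd \<le> (1 + S) * norm e"
    proof (cases "norm dd = 0")
      case True thus ?thesis using S0 by simp
    next
      case False
      assume h: "\<mu> * (norm dd)\<^sup>2 \<le> (1 + S) * norm e * norm dd"
      hence "norm dd * (\<mu> * norm dd) \<le> norm dd * ((1 + S) * norm e)"
        by (simp add: power2_eq_square algebra_simps)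
      thus ?thesis using False by simp
    qed
    have rkeq: "rk A b psi g a1 a2 \<rho> (x k) (y k) = norm e"
      by (simp add: rk_def e_def yt_def w_def yy_def gr_def G_def xk_def)
    have "rk A b psi g a1 a2 \<rho> (x k) (y k) \<le> \<eta> * min (resid A b psi g (x k)) ((resid A b psi g (x k)) powr (1 + \<tau>))"
      using gen unfolding generated_seq_def by blast
    hence ne: "norm e \<le> \<eta> * r powr (1 + \<tau>)"
      unfolding rkeq r_def xk_def using eta by (smt (verit) min.cobounded2 mult_left_mono)
    have "\<mu> * norm dd \<le> (1 + S) * (\<eta> * r powr (1 + \<tau>))"
      using mdd ne S0 by (smt (verit) mult_left_mono)
    hence "norm dd \<le> (1 + S) * (\<eta> * r powr (1 + \<tau>)) / \<mu>" using mupos by (simp add: field_simps)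
    also have "\<dots> = inverse a2 * \<eta> * (1 + S) * r powr (1 + \<tau> - \<rho>)"
      using rpos a2 by (simp add: mueq powr_diff field_simps)
    finally show ?thesis by (simp add: dd_def yy_def S_def)
  qed
  show ?thesis using P1 P2 by (simp add: G_def xk_def r_def)
qed

end
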